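(* Let $a>0$, $\beta>0$, let $\lambda$ be feasible, let $0<\xi<a/2$, let $\rho\in\mathcal{P}$, and suppose $d_0\ge\tau(\beta)a$. Then $\lim_{\delta\to0^+}T_2=0$, where \[ T_2=C_5\,\delta\,(\lambda^2\delta^{2\beta}+4)\int_0^{k_0(\delta)}\mathrm{e}^{-2k(d_0-3a)}\mathrm{e}^{-4ka}\left(\frac{\mathrm{e}^{2k\xi}-1}{k}\right)\mathrm{d}k,\qquad C_5=\frac{(d_1-d_0)\|\rho\|^2_{L^2(\mathcal{M})}}{9\pi}. \]
   Context: For $0<\delta<1$ and constants $\beta>0$, $\lambda\in\mathbb{R}$, put $\mu=\delta+\lambda\delta^{\beta}$. The constant $\lambda$ is feasible if $\lambda>0$ when $0<\beta<1$, $\lambda\ge-1$ when $\beta=1$, $\lambda\ne0$ when $\beta>1$; $\delta_\mu\in(0,1)$ is a number with $\mu\ge0$ for $0<\delta\le\delta_\mu$. $k_0(\delta)=\frac{1}{2a}\ln\left(\frac{1}{2\delta^2+\lambda\delta^{\beta+1}}\right)$, and $\delta$ ranges over $0<\delta\le\delta_0$, where $0<\delta_0\le\delta_\mu$ is such that $k_0(\delta)>0$ for $0<\delta\le\delta_0$. $\tau(\beta)=\frac{\beta+2}{\beta+1}$ for $0<\beta<1$ and $\tau(\beta)=\frac32$ for $\beta\ge1$. Let $\mathcal{M}=\{(x,y):x>a\}$; $\mathcal{P}$ is the set of real-valued $\rho\in L^2(\mathcal{M})\cap L^\infty(\mathcal{M})$ with compact support in $\mathcal{M}$, $0<|\operatorname{supp}\rho|<\infty$,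 and $\int\!\!\int\rho=0$; $d_0=\min\{x:(x,y)\in\operatorname{supp}\rho\}$, $d_1=\max\{x:(x,y)\in\operatorname{supp}\rho\}$. *)

theory Defs
  imports "HOL-Analysis.Analysis"
begin

definition feasible :: "real \<Rightarrow> real \<Rightarrow> bool" where
  "feasible \<beta> lam \<longleftrightarrow>
     (\<beta> < 1 \<longrightarrow> lam > 0) \<and> (\<beta> = 1 \<longrightarrow> lam \<ge> -1) \<and> (\<beta> > 1 \<longrightarrow> lam \<noteq> 0)"

definition tau :: "real \<Rightarrow> real" where
  "tau \<beta> = (if \<beta> < 1 then (\<beta> + 2) / (\<beta> + 1) else 3 / 2)"

definition k0 :: "real \<Rightarrow> real \<Rightarrow> real \<Rightarrow> real \<Rightarrow> real" where
  "k0 a \<beta> lam \<delta> = 1 / (2 * a) * ln (1 / (2 * \<delta>\<^sup>2 + lam * \<delta> powr (\<beta> + 1)))"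

definition halfplane :: "real \<Rightarrow> (real \<times> real) set" where
  "halfplane a = {p. fst p > a}"

definition supp :: "(real \<times> real \<Rightarrow> real) \<Rightarrow> (real \<times> real) set" where
  "supp \<rho> = closure {p. \<rho> p \<noteq> 0}"

definition classP :: "real \<Rightarrow> (real \<times> real \<Rightarrow> real) \<Rightarrow> bool" where
  "classP a \<rho> \<longleftrightarrow>
     \<rho> \<in> borel_measurable lborel \<and>
     integrable lborel (\<lambda>p. (\<rho> p)\<^sup>2) \<and>
     (\<exists>C. AE p in lborel. \<bar>\<rho> p\<bar> \<le> C) \<and>
     compact (supp \<rho>) \<and> supp \<rho> \<subseteq> halfplane a \<and>
     0 < emeasure lborel (supp \<rho>) \<and> emeasure lborel (supp \<rho>) < \<infinity> \<and>
     integral\<^sup>L lborel \<rho> = 0"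

definition d0 :: "(real \<times> real \<Rightarrow> real) \<Rightarrow> real" where
  "d0 \<rho> = Inf (fst ` supp \<rho>)"

definition d1 :: "(real \<times> real \<Rightarrow> real) \<Rightarrow> real" where
  "d1 \<rho> = Sup (fst ` supp \<rho>)"

definition L2sq :: "real \<Rightarrow> (real \<times> real \<Rightarrow> real) \<Rightarrow> real" where
  "L2sq a \<rho> = (\<integral>p\<in>halfplane a. (\<rho> p)\<^sup>2 \<partial>lborel)"

definition C5 :: "real \<Rightarrow> (real \<times> real \<Rightarrow> real) \<Rightarrow> real" where
  "C5 a \<rho> = (d1 \<rho> - d0 \<rho>) * L2sq a \<rho> / (9 * pi)"

definition T2 :: "real \<Rightarrow> real \<Rightarrow> real \<Rightarrow> real \<Rightarrow> (real \<times> real \<Rightarrow> real) \<Rightarrow> real \<Rightarrow> real" where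
  "T2 a \<beta> lam \<xi> \<rho> \<delta> =
     C5 a \<rho> * \<delta> * (lam\<^sup>2 * \<delta> powr (2 * \<beta>) + 4) *
     integral {0..k0 a \<beta> lam \<delta>}
       (\<lambda>k. exp (-2 * k * (d0 \<rho> - 3 * a)) * exp (-4 * k * a) * ((exp (2 * k * \<xi>) - 1) / k))"

end

theory Submission
  imports Defs "HOL-Real_Asymp.Real_Asymp"
begin

lemma expbd: fixes x::real assumes "0 \<le> x" shows "exp x - 1 \<le> x * exp x"
proof -
  have "1 - x \<le> exp (-x)" using exp_ge_add_one_self[of "-x"] by simp
  hence "(1 - x) * exp x \<le> exp (-x) * exp x" by (intro mult_right_mono) auto
  thus ?thesis by (simp add: exp_minus field_simps)
qed

lemma integrand_bd:
  fixes k D a \<xi> :: real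
  assumes "0 \<le> k" "0 < \<xi>" "\<xi> \<le> D - a"
  shows "0 \<le> exp (-2 * k * (D - 3 * a)) * exp (-4 * k * a) * ((exp (2 * k * \<xi>) - 1) / k)
      \<and> exp (-2 * k * (D - 3 * a)) * exp (-4 * k * a) * ((exp (2 * k * \<xi>) - 1) / k) \<le> 2 * \<xi>"
proof (cases "k = 0")
  case True then show ?thesis using assms by simp
next
  case False
  hence kp: "k > 0" using assms by simp
  have e: "exp (-2 * k * (D - 3 * a)) * exp (-4 * k * a) = exp (-2*k*(D-a))"
    by (simp add: exp_add[symmetric] algebra_simps)
  have q0: "0 \<le> (exp (2 * k * \<xi>) - 1) / k" using kp assms by (simp add: divide_nonneg_pos)
  have "exp (2 * k * \<xi>) - 1 \<le> (2*k*\<xi>) * exp (2*k*\<xi>)" using expbd[of "2*k*\<xi>"] kp assms by simp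
  hence q1: "(exp (2 * k * \<xi>) - 1) / k \<le> 2*\<xi> * exp (2*k*\<xi>)" using kp by (simp add: divide_le_eq algebra_simps)
  have "exp (-2*k*(D-a)) * ((exp (2 * k * \<xi>) - 1) / k) \<le> exp (-2*k*(D-a)) * (2*\<xi> * exp (2*k*\<xi>))"
    using q1 by (intro mult_left_mono) auto
  also have "\<dots> = 2*\<xi> * exp (-2*k*(D-a-\<xi>))" by (simp add: exp_add[symmetric] algebra_simps)
  also have "\<dots> \<le> 2*\<xi> * 1" using assms kp by (intro mult_left_mono) auto
  finally have up: "exp (-2 * k * (D - 3 * a)) * exp (-4 * k * a) * ((exp (2 * k * \<xi>) - 1) / k) \<le> 2 * \<xi>" using e by simp
  have "0 \<le> exp (-2*k*(D-a)) * ((exp (2 * k * \<xi>) - 1) / k)" using q0 by (intro mult_nonneg_nonneg) auto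
  then show ?thesis using up e by simp
qed

lemma int_bd:
  fixes f :: "real \<Rightarrow> real"
  assumes "\<And>k. k \<in> {0..K} \<Longrightarrow> 0 \<le> f k \<and> f k \<le> M" "0 \<le> K"
  shows "\<bar>integral {0..K} f\<bar> \<le> M * K"
proof (cases "f integrable_on {0..K}")
  case True
  have "0 \<le> integral {0..K} f" using True assms by (intro integral_nonneg) auto
  moreover have "integral {0..K} f \<le> integral {0..K} (\<lambda>_. M)" using True assms
    by (intro integral_le) auto
  ultimately show ?thesis using assms by (simp add: mult.commute)
next
  case False
  have "0 \<le> M" using assms(1)[of 0] assms(2) by auto
  then show ?thesis using False assms by (simp add: not_integrable_integral)
qed

lemma lim1: "((\<lambda>d::real. d * ln d) \<longlongrightarrow> 0) (at_right 0)" by real_asymp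

lemma X_lim:
  fixes \<beta> lam :: real assumes "\<beta> > 0"
  shows "((\<lambda>\<delta>::real. 2 * \<delta>\<^sup>2 + lam * \<delta> powr (\<beta> + 1)) \<longlongrightarrow> 0) (at_right 0)"
proof -
  have "((\<lambda>\<delta>::real. \<delta> powr (\<beta> + 1)) \<longlongrightarrow> 0) (at_right 0)"
    using assms by (intro tendsto_zero_powrI[where b="\<beta>+1"]) (auto intro!: tendsto_intros eventually_at_rightI[of 0 1])
  hence "((\<lambda>\<delta>::real. 2 * \<delta>\<^sup>2 + lam * \<delta> powr (\<beta> + 1)) \<longlongrightarrow> 2 * 0\<^sup>2 + lam * 0) (at_right 0)"
    by (intro tendsto_intros) (auto intro: tendsto_within_subset[OF tendsto_ident_at])
  thus ?thesis by simp
qed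

lemma X_lower:
  fixes \<beta> lam :: real assumes "\<beta> > 0" "feasible \<beta> lam"
  shows "\<exists>c p. c > 0 \<and> p > 0 \<and> (\<forall>\<^sub>F \<delta> in at_right 0. c * \<delta> powr p \<le> 2 * \<delta>\<^sup>2 + lam * \<delta> powr (\<beta> + 1))"
proof -
  have pos: "\<forall>\<^sub>F \<delta> in at_right (0::real). \<delta> > 0" by (simp add: eventually_at_right_less)
  consider "\<beta> < 1" | "\<beta> = 1" | "\<beta> > 1" by linarith
  then show ?thesis
  proof cases
    case 1
    hence l: "lam > 0" using assms unfolding feasible_def by auto
    have "\<forall>\<^sub>F \<delta> in at_right (0::real). lam * \<delta> powr (\<beta> + 1) \<le> 2 * \<delta>\<^sup>2 + lam * \<delta> powr (\<beta> + 1)"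
      by simp
    thus ?thesis using l assms by (intro exI[of _ lam] exI[of _ "\<beta>+1"]) auto
  next
    case 2
    hence l: "lam \<ge> -1" using assms unfolding feasible_def by auto
    have "\<forall>\<^sub>F \<delta> in at_right (0::real). 1 * \<delta> powr 2 \<le> 2 * \<delta>\<^sup>2 + lam * \<delta> powr (\<beta> + 1)"
      using pos
    proof eventually_elim
      case (elim \<delta>)
      have "\<delta> powr 2 = \<delta>\<^sup>2" using elim by (simp add: powr_numeral)
      have "lam * \<delta>\<^sup>2 \<ge> (-1) * \<delta>\<^sup>2" using l by (intro mult_right_mono) auto
      moreover have "\<delta> powr (\<beta> + 1) = \<delta>\<^sup>2" using 2 elim by (simp add: powr_numeral)
      ultimately show ?case using \<open>\<delta> powr 2 = \<delta>\<^sup>2\<close> by simp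
    qed
    thus ?thesis by (intro exI[of _ 1] exI[of _ 2]) auto
  next
    case 3
    have t: "((\<lambda>\<delta>::real. \<delta> powr (\<beta> - 1)) \<longlongrightarrow> 0) (at_right 0)"
      using 3 by (intro tendsto_zero_powrI[where b="\<beta>-1"]) (auto intro!: tendsto_intros eventually_at_rightI[of 0 1])
    hence "((\<lambda>\<delta>::real. \<bar>lam\<bar> * \<delta> powr (\<beta> - 1)) \<longlongrightarrow> \<bar>lam\<bar> * 0) (at_right 0)"
      by (intro tendsto_intros)
    hence "\<forall>\<^sub>F \<delta> in at_right (0::real). \<bar>lam\<bar> * \<delta> powr (\<beta> - 1) < 1"
      by (intro order_tendstoD) auto
    hence "\<forall>\<^sub>F \<delta> in at_right (0::real). 1 * \<delta> powr 2 \<le> 2 * \<delta>\<^sup>2 + lam * \<delta> powr (\<beta> + 1)"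
      using pos
    proof eventually_elim
      case (elim \<delta>)
      have e2: "\<delta> powr 2 = \<delta>\<^sup>2" using elim by (simp add: powr_numeral)
      have e3: "\<delta> powr (\<beta> + 1) = \<delta>\<^sup>2 * \<delta> powr (\<beta> - 1)"
      proof -
        have "\<delta> powr (\<beta> + 1) = \<delta> powr (2 + (\<beta> - 1))" by (simp add: add.commute)
        also have "\<dots> = \<delta> powr 2 * \<delta> powr (\<beta> - 1)" by (rule powr_add)
        finally show ?thesis using e2 by simp
      qed
      have "- (lam * \<delta> powr (\<beta> - 1)) \<le> \<bar>lam\<bar> * \<delta> powr (\<beta> - 1)"
        using abs_ge_minus_self[of "lam * \<delta> powr (\<beta> - 1)"] by (simp add: abs_mult)
      hence "lam * \<delta> powr (\<beta> - 1) \<ge> -1" using elim by linarith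
      hence "\<delta>\<^sup>2 * (lam * \<delta> powr (\<beta> - 1)) \<ge> \<delta>\<^sup>2 * (-1)" by (intro mult_left_mono) auto
      thus ?case using e2 e3 by (simp add: algebra_simps)
    qed
    thus ?thesis by (intro exI[of _ 1] exI[of _ 2]) auto
  qed
qed

theorem lemma5p3:
  fixes a \<beta> lam \<xi> :: real and \<rho> :: "real \<times> real \<Rightarrow> real"
  assumes "a > 0" and "\<beta> > 0" and "feasible \<beta> lam"
    and "0 < \<xi>" and "\<xi> < a / 2"
    and "classP a \<rho>"
    and "d0 \<rho> \<ge> tau \<beta> * a"
  shows "((\<lambda>\<delta>. T2 a \<beta> lam \<xi> \<rho> \<delta>) \<longlongrightarrow> 0) (at_right 0)"
proof -
  define X where "X = (\<lambda>\<delta>::real. 2 * \<delta>\<^sup>2 + lam * \<delta> powr (\<beta> + 1))"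
  obtain c p where cp: "c > 0" "p > 0" "\<forall>\<^sub>F \<delta> in at_right 0. c * \<delta> powr p \<le> X \<delta>"
    using X_lower[OF assms(2,3)] unfolding X_def by blast
  have "\<forall>\<^sub>F \<delta> in at_right 0. X \<delta> < 1"
    using X_lim[OF assms(2), of lam] unfolding X_def by (intro order_tendstoD) auto
  have tau: "tau \<beta> \<ge> 3/2" unfolding tau_def using assms(2) by (auto simp: field_simps)
  have "3/2 * a \<le> tau \<beta> * a" using tau assms(1) by (intro mult_right_mono) auto
  hence D: "\<xi> \<le> d0 \<rho> - a" using assms by linarith
  define K where "K = \<bar>C5 a \<rho>\<bar> * (lam\<^sup>2 + 4) * (2 * \<xi>) / (2 * a)"
  define g where "g = (\<lambda>\<delta>::real. K * (\<delta> * (- ln c) - p * (\<delta> * ln \<delta>)))"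
  have glim: "(g \<longlongrightarrow> 0) (at_right 0)"
  proof -
    have "(g \<longlongrightarrow> K * (0 * (- ln c) - p * 0)) (at_right 0)"
      unfolding g_def by (intro tendsto_intros lim1)
    thus ?thesis by simp
  qed
  have ev1: "\<forall>\<^sub>F \<delta> in at_right (0::real). 0 < \<delta> \<and> \<delta> < 1"
    by (intro eventually_at_rightI[of 0 1]) auto
  have "\<forall>\<^sub>F \<delta> in at_right 0. norm (T2 a \<beta> lam \<xi> \<rho> \<delta>) \<le> g \<delta>"
    using ev1 cp(3) \<open>\<forall>\<^sub>F \<delta> in at_right 0. X \<delta> < 1\<close>
  proof eventually_elim
    case (elim \<delta>)
    hence d: "0 < \<delta>" "\<delta> < 1" and lo: "c * \<delta> powr p \<le> X \<delta>" and hi: "X \<delta> < 1" by auto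
    have cpos: "0 < c * \<delta> powr p" using cp d by simp
    have k0eq: "k0 a \<beta> lam \<delta> = 1 / (2 * a) * ln (1 / X \<delta>)" unfolding k0_def X_def by simp
    have Xpos: "X \<delta> > 0" using cpos lo by linarith
    have lnX: "0 \<le> ln (1 / X \<delta>)" using Xpos hi by simp
    have "ln (1 / X \<delta>) \<le> ln (1 / (c * \<delta> powr p))"
      using Xpos cpos lo by (subst ln_le_cancel_iff) (auto simp: divide_simps)
    also have "\<dots> = - ln c - p * ln \<delta>"
      using cp d by (simp add: ln_div ln_mult ln_powr)
    finally have lnU: "ln (1 / X \<delta>) \<le> - ln c - p * ln \<delta>" .
    have k0nn: "0 \<le> k0 a \<beta> lam \<delta>" using k0eq lnX assms(1) by simp
    have k0le: "k0 a \<beta> lam \<delta> \<le> (- ln c - p * ln \<delta>) / (2 * a)"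
      using k0eq lnU assms(1) by (simp add: divide_right_mono)
    define I where "I = integral {0..k0 a \<beta> lam \<delta>}
       (\<lambda>k. exp (-2 * k * (d0 \<rho> - 3 * a)) * exp (-4 * k * a) * ((exp (2 * k * \<xi>) - 1) / k))"
    have Ib: "\<bar>I\<bar> \<le> 2 * \<xi> * k0 a \<beta> lam \<delta>"
      unfolding I_def using integrand_bd[OF _ assms(4) D] k0nn by (intro int_bd) auto
    have pw: "\<delta> powr (2 * \<beta>) \<le> 1" using d assms(2) by (simp add: powr_le1)
    have P: "0 \<le> lam\<^sup>2 * \<delta> powr (2 * \<beta>) + 4" by simp
    have P2: "lam\<^sup>2 * \<delta> powr (2 * \<beta>) + 4 \<le> lam\<^sup>2 + 4"
      using pw mult_left_mono[OF pw, of "lam\<^sup>2"] by simp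
    have "norm (T2 a \<beta> lam \<xi> \<rho> \<delta>) = \<bar>C5 a \<rho>\<bar> * \<delta> * (lam\<^sup>2 * \<delta> powr (2 * \<beta>) + 4) * \<bar>I\<bar>"
      unfolding T2_def I_def using d P by (simp add: abs_mult)
    also have "\<dots> \<le> \<bar>C5 a \<rho>\<bar> * \<delta> * (lam\<^sup>2 + 4) * (2 * \<xi> * ((- ln c - p * ln \<delta>) / (2 * a)))"
    proof -
      have "\<bar>I\<bar> \<le> 2 * \<xi> * ((- ln c - p * ln \<delta>) / (2 * a))"
        using Ib k0le assms(4) by (meson mult_left_mono order_trans less_eq_real_def zero_le_numeral mult_nonneg_nonneg)
      thus ?thesis using d P P2
        by (intro mult_mono) (auto intro!: mult_nonneg_nonneg)
    qed
    also have "\<dots> = g \<delta>" unfolding g_def K_def using assms(1) by (simp add: field_simps)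
    finally show ?case .
  qed
  thus ?thesis using glim by (rule Lim_null_comparison)
qed

end
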